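(* Let $G$ and $K$ be convex bodies in $\mathbb{R}^d$ with $O\in\operatorname{int}(G)$ and $G\subset\operatorname{int}(K)$. Let $\alpha>0$ and $G_+:=\{y\in\operatorname{int}(K):\inf_{g\in G}d_K(y,g)\le\alpha\}$. Then for all $p,x\in K^\circ$, $$d_{(G_+)^\circ}(p,x)\le d_{G^\circ}(p,x)+2\alpha.$$ In particular, if $d_{G^\circ}(p,x)\le\alpha$ then $d_{(G_+)^\circ}(p,x)\le3\alpha$.
   Context: Polar $X^\circ=\{y:\langle w,y\rangle\le1\ \forall w\in X\}$. For a convex body $E$ and distinct $u,v\in\operatorname{int}(E)$, let $v'$ (resp. $u'$) be where the ray from $u$ through $v$ (resp. from $v$ through $u$) meets $\partial E$; the Hilbert distance is $d_E(u,v)=\frac12\ln\left(\frac{\|v-u'\|}{\|u-u'\|}\frac{\|u-v'\|}{\|v-v'\|}\right)$, $d_E(u,u)=0$. *)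

theory Defs
  imports "HOL-Analysis.Analysis"
begin

definition convex_body :: "'a::euclidean_space set \<Rightarrow> bool" where
  "convex_body E \<longleftrightarrow> compact E \<and> convex E \<and> interior E \<noteq> {}"

definition polar :: "'a::euclidean_space set \<Rightarrow> 'a set" where
  "polar X = {y. \<forall>w\<in>X. w \<bullet> y \<le> 1}"

definition ray_boundary :: "'a::euclidean_space set \<Rightarrow> 'a \<Rightarrow> 'a \<Rightarrow> 'a" where
  "ray_boundary E u v = (THE w. w \<in> frontier E \<and> (\<exists>t\<ge>0. w = u + t *\<^sub>R (v - u)))"

text \<open>Hilbert distance (meaningful for u, v in the interior of E).\<close>
definition hilbert_dist :: "'a::euclidean_space set \<Rightarrow> 'a \<Rightarrow> 'a \<Rightarrow> real" where
  "hilbert_dist E u v =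
     (if u = v then 0
      else (let v' = ray_boundary E u v; u' = ray_boundary E v u in
            ln ((norm (v - u') / norm (u - u')) * (norm (u - v') / norm (v - v'))) / 2))"

end

theory Submission
  imports Defs
begin

lemma beyond:
  fixes C :: "'a::euclidean_space set"
  assumes "convex C" "u \<in> interior C" "u + t *\<^sub>R l \<in> frontier C" "t > 0"
    "\<tau> > t" "u + \<tau> *\<^sub>R l \<in> closure C"
  shows False
proof -
  have l: "l \<noteq> 0" using assms(2,3) by (auto simp: frontier_def)
  have "open_segment u (u + \<tau> *\<^sub>R l) \<subseteq> interior C"
    using in_interior_closure_convex_segment[OF assms(1,2,6)] .
  moreover have "u + t *\<^sub>R l \<in> open_segment u (u + \<tau> *\<^sub>R l)"
  proof -
    have "u + t *\<^sub>R l = (1 - t/\<tau>) *\<^sub>R u + (t/\<tau>) *\<^sub>R (u + \<tau> *\<^sub>R l)"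
      using assms(4,5) by (simp add: algebra_simps)
    moreover have "u \<noteq> u + \<tau> *\<^sub>R l" using l assms(4,5) by simp
    ultimately show ?thesis unfolding in_segment using assms(4,5)
      by (intro conjI exI[of _ "t/\<tau>"]) auto
  qed
  ultimately show False using assms(3) by (auto simp: frontier_def)
qed

lemma ray_struct:
  fixes C :: "'a::euclidean_space set"
  assumes "convex C" "bounded C" "u \<in> interior C" "v \<in> interior C" "u \<noteq> v"
  shows "\<exists>t>1. ray_boundary C u v = u + t *\<^sub>R (v - u) \<and> u + t *\<^sub>R (v - u) \<in> frontier C
          \<and> (\<forall>\<tau>>t. u + \<tau> *\<^sub>R (v - u) \<notin> closure C)"
proof -
  have l: "v - u \<noteq> 0" using assms by simp
  obtain d where d: "0 < d" "u + d *\<^sub>R (v - u) \<in> frontier C"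
     "\<And>e. \<lbrakk>0 \<le> e; e < d\<rbrakk> \<Longrightarrow> (u + e *\<^sub>R (v - u)) \<in> interior C"
    using ray_to_frontier[OF assms(2,3) l] by blast
  have bey: "\<forall>\<tau>>d. u + \<tau> *\<^sub>R (v - u) \<notin> closure C"
    using beyond[OF assms(1,3) d(2) d(1)] by blast
  have "d \<noteq> 1" using d(2) assms(4) by (auto simp: frontier_def)
  moreover have "\<not> d < 1" using bey assms(4) interior_subset closure_subset by fastforce
  ultimately have d1: "d > 1" by linarith
  have "ray_boundary C u v = u + d *\<^sub>R (v - u)"
    unfolding ray_boundary_def
  proof (rule the_equality)
    show "u + d *\<^sub>R (v - u) \<in> frontier C \<and> (\<exists>t\<ge>0. u + d *\<^sub>R (v - u) = u + t *\<^sub>R (v - u))"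
      using d by (intro conjI exI[of _ d]) auto
  next
    fix w assume w: "w \<in> frontier C \<and> (\<exists>t\<ge>0. w = u + t *\<^sub>R (v - u))"
    then obtain t where t: "t \<ge> 0" "w = u + t *\<^sub>R (v - u)" by blast
    have "\<not> t < d" using d(3)[of t] t w by (auto simp: frontier_def)
    moreover have "\<not> t > d" using bey t w by (auto simp: frontier_def)
    ultimately show "w = u + d *\<^sub>R (v - u)" using t by simp
  qed
  then show ?thesis using d d1 bey by blast
qed

lemma hd_formula:
  fixes C :: "'a::euclidean_space set"
  assumes "convex C" "bounded C" "u \<in> interior C" "v \<in> interior C" "u \<noteq> v"
  shows "\<exists>s t. s > 1 \<and> t > 1 \<and> u + t *\<^sub>R (v - u) \<in> frontier C
          \<and> (\<forall>\<tau>>t. u + \<tau> *\<^sub>R (v - u) \<notin> closure C)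
          \<and> v + s *\<^sub>R (u - v) \<in> frontier C
          \<and> (\<forall>\<tau>>s. v + \<tau> *\<^sub>R (u - v) \<notin> closure C)
          \<and> hilbert_dist C u v = ln (s/(s-1) * (t/(t-1))) / 2"
proof -
  obtain t where t: "t > 1" "ray_boundary C u v = u + t *\<^sub>R (v - u)"
    "u + t *\<^sub>R (v - u) \<in> frontier C" "\<forall>\<tau>>t. u + \<tau> *\<^sub>R (v - u) \<notin> closure C"
    using ray_struct[OF assms] by blast
  obtain s where s: "s > 1" "ray_boundary C v u = v + s *\<^sub>R (u - v)"
    "v + s *\<^sub>R (u - v) \<in> frontier C" "\<forall>\<tau>>s. v + \<tau> *\<^sub>R (u - v) \<notin> closure C"
    using ray_struct[OF assms(1,2,4,3)] assms(5) by metis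
  have n: "norm (u - v) > 0" using assms(5) by simp
  have e1: "norm (v - (v + s *\<^sub>R (u - v))) = s * norm (u - v)" using s(1) by simp
  have e2: "u - (v + s *\<^sub>R (u - v)) = (1 - s) *\<^sub>R (u - v)" by (simp add: algebra_simps)
  have e2': "norm (u - (v + s *\<^sub>R (u - v))) = (s - 1) * norm (u - v)" unfolding e2 using s(1) by simp
  have e3: "norm (u - (u + t *\<^sub>R (v - u))) = t * norm (u - v)" using t(1) by (simp add: norm_minus_commute)
  have e4: "v - (u + t *\<^sub>R (v - u)) = (1 - t) *\<^sub>R (v - u)" by (simp add: algebra_simps)
  have e4': "norm (v - (u + t *\<^sub>R (v - u))) = (t - 1) * norm (u - v)" unfolding e4 using t(1)
    by (simp add: norm_minus_commute)
  have "hilbert_dist C u v = ln (s/(s-1) * (t/(t-1))) / 2"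
    unfolding hilbert_dist_def Let_def using assms(5) t(2) s(2) e1 e2' e3 e4' n by simp
  then show ?thesis using s t by blast
qed

lemma polar_closed: "closed (polar E)"
proof -
  have "polar E = (\<Inter>w\<in>E. {y. w \<bullet> y \<le> 1})" unfolding polar_def by auto
  then show ?thesis by (simp add: closed_INT closed_halfspace_le)
qed

lemma polar_convex: "convex (polar E)"
proof -
  have "polar E = (\<Inter>w\<in>E. {y. w \<bullet> y \<le> 1})" unfolding polar_def by auto
  then show ?thesis by (simp add: convex_INT convex_halfspace_le)
qed

lemma polar_antimono: "A \<subseteq> B \<Longrightarrow> polar B \<subseteq> polar A"
  unfolding polar_def by auto

lemma pos_interior:
  fixes E :: "'a::euclidean_space set"
  assumes "w \<in> E" "u \<in> interior (polar E)"
  shows "w \<bullet> u < 1"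
proof (cases "w = 0")
  case True then show ?thesis by simp
next
  case False
  obtain e where e: "e > 0" "ball u e \<subseteq> polar E" using assms(2) by (meson mem_interior)
  let ?z = "u + (e/2/norm w) *\<^sub>R w"
  have "dist u ?z < e" using e False by (simp add: dist_norm)
  then have "?z \<in> polar E" using e by auto
  then have "w \<bullet> ?z \<le> 1" using assms(1) unfolding polar_def by auto
  moreover have "w \<bullet> ?z = w \<bullet> u + e/2 * norm w" using False
    by (simp add: inner_add_right power2_norm_eq_inner[symmetric] power2_eq_square)
  moreover have "e/2 * norm w > 0" using e False by simp
  ultimately show ?thesis by linarith
qed

lemma affine_id:
  fixes w u v :: "'a::real_inner"
  shows "1 - w \<bullet> (u + t *\<^sub>R (v - u)) = (1 - t) * (1 - w \<bullet> u) + t * (1 - w \<bullet> v)"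
  by (simp add: inner_add_right inner_diff_right algebra_simps)

lemma polar_i:
  assumes "u + t *\<^sub>R (v - u) \<in> polar E" "w \<in> E"
  shows "(t - 1) * (1 - w \<bullet> u) \<le> t * (1 - w \<bullet> v)"
proof -
  have "w \<bullet> (u + t *\<^sub>R (v - u)) \<le> 1" using assms unfolding polar_def by auto
  then have "(1 - t) * (1 - w \<bullet> u) + t * (1 - w \<bullet> v) \<ge> 0" using affine_id[of w u t v] by linarith
  then show ?thesis by (simp add: algebra_simps)
qed

lemma polar_ii:
  fixes E :: "'a::euclidean_space set"
  assumes "u \<in> interior (polar E)" "v \<in> interior (polar E)" "t > 1"
    "\<forall>\<tau>>t. u + \<tau> *\<^sub>R (v - u) \<notin> closure (polar E)"
    "\<forall>w\<in>E. 1 - w \<bullet> u \<le> M * (1 - w \<bullet> v)"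
  shows "t \<le> M * (t - 1)"
proof (rule ccontr)
  assume H: "\<not> t \<le> M * (t - 1)"
  define \<tau> where "\<tau> = (if M \<le> 1 then t + 1 else M / (M - 1))"
  have gt: "\<tau> > t"
  proof (cases "M \<le> 1")
    case True then show ?thesis by (simp add: \<tau>_def)
  next
    case False
    then have "t * (M - 1) < M" using H by (simp add: algebra_simps)
    then show ?thesis using False by (simp add: \<tau>_def field_simps)
  qed
  have "u + \<tau> *\<^sub>R (v - u) \<in> polar E"
    unfolding polar_def
  proof (intro CollectI ballI)
    fix w assume w: "w \<in> E"
    have pu: "1 - w \<bullet> u > 0" and pv: "1 - w \<bullet> v > 0"
      using pos_interior[OF w assms(1)] pos_interior[OF w assms(2)] by auto
    have le: "1 - w \<bullet> u \<le> M * (1 - w \<bullet> v)" using assms(5) w by blast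
    have "(1 - \<tau>) * (1 - w \<bullet> u) + \<tau> * (1 - w \<bullet> v) \<ge> 0"
    proof (cases "M \<le> 1")
      case True
      have "M * (1 - w \<bullet> v) \<le> 1 * (1 - w \<bullet> v)" using pv True
        by (intro mult_right_mono) auto
      then have "M * (1 - w \<bullet> v) \<le> 1 - w \<bullet> v" by simp
      then have "1 - w \<bullet> u \<le> 1 - w \<bullet> v" using le by linarith
      moreover have "\<tau> > 0" using gt assms(3) by linarith
      ultimately have "\<tau> * ((1 - w \<bullet> v) - (1 - w \<bullet> u)) \<ge> 0" by simp
      moreover have "(1 - \<tau>) * (1 - w \<bullet> u) + \<tau> * (1 - w \<bullet> v)
          = (1 - w \<bullet> u) + \<tau> * ((1 - w \<bullet> v) - (1 - w \<bullet> u))" by (simp add: algebra_simps)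
      ultimately show ?thesis using pu by linarith
    next
      case False
      have t1: "\<tau> = M / (M - 1)" using False by (simp add: \<tau>_def)
      have "(1 - \<tau>) * (1 - w \<bullet> u) \<ge> (1 - \<tau>) * (M * (1 - w \<bullet> v))"
        using le gt assms(3) by (intro mult_left_mono_neg) auto
      moreover have "(1 - \<tau>) * (M * (1 - w \<bullet> v)) + \<tau> * (1 - w \<bullet> v) = 0"
        using False unfolding t1 by (simp add: field_simps)
      ultimately show ?thesis by linarith
    qed
    then show "w \<bullet> (u + \<tau> *\<^sub>R (v - u)) \<le> 1" using affine_id[of w u \<tau> v] by linarith
  qed
  then show False using assms(4) gt closure_subset by blast
qed

lemma affine_id2:
  fixes p u v :: "'a::real_inner"
  shows "1 - (u + t *\<^sub>R (v - u)) \<bullet> p = (1 - t) * (1 - u \<bullet> p) + t * (1 - v \<bullet> p)"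
  by (simp add: inner_add_left inner_diff_left algebra_simps)

lemma K_step:
  assumes "u + t *\<^sub>R (v - u) \<in> K" "p \<in> polar K"
  shows "(t - 1) * (1 - u \<bullet> p) \<le> t * (1 - v \<bullet> p)"
proof -
  have "(u + t *\<^sub>R (v - u)) \<bullet> p \<le> 1" using assms unfolding polar_def by auto
  then have "(1 - t) * (1 - u \<bullet> p) + t * (1 - v \<bullet> p) \<ge> 0" using affine_id2[of u t v p] by linarith
  then show ?thesis by (simp add: algebra_simps)
qed

lemma K_ineq:
  fixes K :: "'a::euclidean_space set"
  assumes "convex K" "compact K" "a \<in> interior K" "b \<in> interior K" "p \<in> polar K" "x \<in> polar K"
  shows "(1 - a \<bullet> p) * (1 - b \<bullet> x) \<le> exp (2 * hilbert_dist K a b) * ((1 - b \<bullet> p) * (1 - a \<bullet> x))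
     \<and> hilbert_dist K a b \<ge> 0"
proof (cases "a = b")
  case True then show ?thesis by (simp add: hilbert_dist_def)
next
  case False
  have bK: "bounded K" "closed K" using assms(2) compact_imp_bounded compact_imp_closed by auto
  obtain s t where st: "s > 1" "t > 1" "a + t *\<^sub>R (b - a) \<in> frontier K"
     "b + s *\<^sub>R (a - b) \<in> frontier K" "hilbert_dist K a b = ln (s/(s-1) * (t/(t-1))) / 2"
    using hd_formula[OF assms(1) bK(1) assms(3,4) False] by blast
  have fK: "frontier K \<subseteq> K" using bK(2) by (simp add: frontier_subset_closed)
  have i1: "(t - 1) * (1 - a \<bullet> p) \<le> t * (1 - b \<bullet> p)" using K_step[OF _ assms(5)] st(3) fK by blast
  have i2: "(s - 1) * (1 - b \<bullet> x) \<le> s * (1 - a \<bullet> x)" using K_step[OF _ assms(6)] st(4) fK by blast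
  have aK: "a \<in> K" "b \<in> K" using assms(3,4) interior_subset by auto
  have n: "1 - a \<bullet> p \<ge> 0" "1 - b \<bullet> x \<ge> 0" "1 - b \<bullet> p \<ge> 0" using aK assms(5,6) unfolding polar_def by auto
  have n2: "t * (1 - b \<bullet> p) \<ge> 0" "(s - 1) * (1 - b \<bullet> x) \<ge> 0" using n st by auto
  have "((t - 1) * (1 - a \<bullet> p)) * ((s - 1) * (1 - b \<bullet> x)) \<le> (t * (1 - b \<bullet> p)) * (s * (1 - a \<bullet> x))"
    using i1 i2 n2 by (rule mult_mono)
  then have "((t - 1) * (s - 1)) * ((1 - a \<bullet> p) * (1 - b \<bullet> x)) \<le> (t * s) * ((1 - b \<bullet> p) * (1 - a \<bullet> x))"
    by (simp add: ac_simps)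
  moreover have D: "(t - 1) * (s - 1) > 0" using st by simp
  ultimately have "(1 - a \<bullet> p) * (1 - b \<bullet> x) \<le> ((t * s) * ((1 - b \<bullet> p) * (1 - a \<bullet> x))) / ((t - 1) * (s - 1))"
    by (subst pos_le_divide_eq[OF D]) (simp add: ac_simps)
  moreover have "((t * s) * ((1 - b \<bullet> p) * (1 - a \<bullet> x))) / ((t - 1) * (s - 1))
     = (s/(s-1) * (t/(t-1))) * ((1 - b \<bullet> p) * (1 - a \<bullet> x))" by (simp add: ac_simps)
  ultimately have "(1 - a \<bullet> p) * (1 - b \<bullet> x) \<le> (s/(s-1) * (t/(t-1))) * ((1 - b \<bullet> p) * (1 - a \<bullet> x))"
    by simp
  moreover have P: "s/(s-1) * (t/(t-1)) \<ge> 1"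
  proof -
    have "s/(s-1) \<ge> 1" "t/(t-1) \<ge> 1" using st(1,2) by (simp_all add: field_simps)
    then show ?thesis by (metis mult_mono' mult_1 zero_le_one)
  qed
  moreover have EX: "exp (2 * hilbert_dist K a b) = s/(s-1) * (t/(t-1))"
  proof -
    have "2 * hilbert_dist K a b = ln (s/(s-1) * (t/(t-1)))" using st(5) by simp
    then show ?thesis using P by simp
  qed
  ultimately have "(1 - a \<bullet> p) * (1 - b \<bullet> x) \<le> exp (2 * hilbert_dist K a b) * ((1 - b \<bullet> p) * (1 - a \<bullet> x))"
    by (simp only: EX)
  moreover have "hilbert_dist K a b \<ge> 0" unfolding st(5) using P by simp
  ultimately show ?thesis by blast
qed

lemma conv_T:
  fixes t A B :: real
  assumes "t > 1" "(t - 1) * A \<le> t * B"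
  shows "A \<le> t/(t-1) * B"
proof -
  have "A \<le> (t * B) / (t - 1)" using assms by (subst pos_le_divide_eq) (auto simp: ac_simps)
  then show ?thesis by simp
qed

lemma back_T:
  fixes t M :: real
  assumes "t > 1" "t \<le> M * (t - 1)"
  shows "t/(t-1) \<le> M"
  using assms by (subst pos_divide_le_eq) auto

lemma main_aux:
  fixes G K Gp :: "'a::euclidean_space set" and \<alpha> :: real
  assumes "convex_body G" and "convex_body K"
    and "0 \<in> interior G" and "G \<subseteq> interior K"
    and "\<alpha> > 0"
    and Gp: "Gp = {y \<in> interior K. (INF g\<in>G. hilbert_dist K y g) \<le> \<alpha>}"
  shows "\<forall>p\<in>polar K. \<forall>x\<in>polar K.
           hilbert_dist (polar Gp) p x \<le> hilbert_dist (polar G) p x + 2 * \<alpha>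
         \<and> (hilbert_dist (polar G) p x \<le> \<alpha> \<longrightarrow> hilbert_dist (polar Gp) p x \<le> 3 * \<alpha>)"
proof -
  have cG: "compact G" "convex G" and cK: "compact K" "convex K"
    using assms(1,2) unfolding convex_body_def by auto
  have G0: "0 \<in> G" using assms(3) interior_subset by blast
  then have Gne: "G \<noteq> {}" by blast
  obtain r where r: "r > 0" "ball 0 r \<subseteq> G" using assms(3) by (meson mem_interior)
  obtain e1 where e1: "e1 > 0" "(\<Union>g\<in>G. ball g e1) \<subseteq> interior K"
    using compact_subset_open_imp_ball_epsilon_subset[OF cG(1) open_interior assms(4)] by blast
  obtain R where R: "R > 0" "\<forall>z\<in>K. norm z \<le> R"
    using compact_imp_bounded[OF cK(1)] bounded_pos by metis
  define \<delta> where "\<delta> = e1 / (2 * R)"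
  have \<delta>: "\<delta> > 0" using e1 R by (simp add: \<delta>_def)
  define c0 where "c0 = 1 - 1 / (1 + \<delta>)"
  have c0: "c0 > 0" using \<delta> by (simp add: c0_def field_simps)
  have Gx: "1 - g \<bullet> x \<ge> c0" if g: "g \<in> G" and x: "x \<in> polar K" for g x
  proof -
    have "norm (\<delta> *\<^sub>R g) \<le> \<delta> * R" using R g assms(4) interior_subset \<delta>
      by (auto intro!: mult_left_mono)
    also have "\<delta> * R < e1" using R e1 by (simp add: \<delta>_def)
    finally have "(1 + \<delta>) *\<^sub>R g \<in> ball g e1" by (simp add: dist_norm algebra_simps)
    then have "(1 + \<delta>) *\<^sub>R g \<in> K" using e1 g interior_subset by blast
    then have "(1 + \<delta>) * (g \<bullet> x) \<le> 1" using x unfolding polar_def by auto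
    then have "g \<bullet> x \<le> 1 / (1 + \<delta>)" using \<delta> by (simp add: field_simps)
    then show ?thesis by (simp add: c0_def)
  qed
  have zK: "0 \<in> polar K" unfolding polar_def by simp
  have dnn: "hilbert_dist K y g \<ge> 0" if "y \<in> interior K" "g \<in> interior K" for y g
    using K_ineq[OF cK(2,1) that zK zK] by blast
  have bdd: "bdd_below ((\<lambda>g. hilbert_dist K y g) ` G)" if "y \<in> interior K" for y
    using dnn[OF that] assms(4) by (intro bdd_belowI[of _ 0]) auto
  have GGp: "G \<subseteq> Gp"
  proof
    fix g assume g: "g \<in> G"
    have "(INF g'\<in>G. hilbert_dist K g g') \<le> hilbert_dist K g g"
      using g assms(4) by (intro cINF_lower bdd) auto
    also have "\<dots> = 0" by (simp add: hilbert_dist_def)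
    finally show "g \<in> Gp" using g assms(4,5) Gp by auto
  qed
  have GpK: "Gp \<subseteq> interior K" using Gp by auto
  define c where "c = c0 / exp (2 * (\<alpha> + 1))"
  have c: "c > 0" using c0 by (simp add: c_def)
  have Gpx: "1 - y \<bullet> x \<ge> c" if y: "y \<in> Gp" and x: "x \<in> polar K" for y x
  proof -
    have yK: "y \<in> interior K" using y GpK by blast
    have "(INF g\<in>G. hilbert_dist K y g) < \<alpha> + 1" using y Gp by auto
    then obtain g where g: "g \<in> G" "hilbert_dist K y g < \<alpha> + 1"
      using cINF_less_iff[OF Gne bdd[OF yK]] by blast
    have "(1 - y \<bullet> 0) * (1 - g \<bullet> x) \<le> exp (2 * hilbert_dist K y g) * ((1 - g \<bullet> 0) * (1 - y \<bullet> x))"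
      using K_ineq[OF cK(2,1) yK _ zK x] g assms(4) by blast
    then have "1 - g \<bullet> x \<le> exp (2 * hilbert_dist K y g) * (1 - y \<bullet> x)" by simp
    also have "\<dots> \<le> exp (2 * (\<alpha> + 1)) * (1 - y \<bullet> x)"
    proof (rule mult_right_mono)
      show "exp (2 * hilbert_dist K y g) \<le> exp (2 * (\<alpha> + 1))" using g by simp
      have "1 - y \<bullet> x \<ge> 0" using x yK interior_subset unfolding polar_def by auto
      then show "0 \<le> 1 - y \<bullet> x" .
    qed
    finally have "c0 \<le> exp (2 * (\<alpha> + 1)) * (1 - y \<bullet> x)" using Gx[OF g(1) x] by linarith
    then show ?thesis unfolding c_def by (simp add: divide_le_eq mult.commute)
  qed
  have KGp: "polar K \<subseteq> interior (polar Gp)"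
  proof
    fix x assume x: "x \<in> polar K"
    have "ball x (c / R) \<subseteq> polar Gp"
    proof
      fix z assume z: "z \<in> ball x (c / R)"
      show "z \<in> polar Gp" unfolding polar_def
      proof (intro CollectI ballI)
        fix y assume y: "y \<in> Gp"
        have ny: "norm y \<le> R" using R y GpK interior_subset by blast
        have "y \<bullet> (z - x) \<le> norm y * norm (z - x)" by (rule norm_cauchy_schwarz)
        also have "\<dots> \<le> R * (c / R)"
          using z ny R(1) by (intro mult_mono) (auto simp: dist_norm norm_minus_commute)
        also have "\<dots> = c" using R by simp
        finally have "y \<bullet> (z - x) \<le> c" .
        moreover have "y \<bullet> z = y \<bullet> x + y \<bullet> (z - x)" by (simp add: inner_diff_right)
        ultimately show "y \<bullet> z \<le> 1" using Gpx[OF y x] by linarith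
      qed
    qed
    then show "x \<in> interior (polar Gp)" using c R by (meson divide_pos_pos mem_interior)
  qed
  have KG: "polar K \<subseteq> interior (polar G)"
    using KGp interior_mono[OF polar_antimono[OF GGp]] by blast
  have bG: "bounded (polar G)"
  proof -
    have "polar G \<subseteq> cball 0 (2 / r)"
    proof
      fix z assume z: "z \<in> polar G"
      show "z \<in> cball 0 (2 / r)"
      proof (cases "z = 0")
        case True then show ?thesis using r by simp
      next
        case False
        let ?w = "(r / 2 / norm z) *\<^sub>R z"
        have "?w \<in> ball 0 r" using r False by simp
        then have "?w \<in> G" using r by blast
        then have "?w \<bullet> z \<le> 1" using z unfolding polar_def by auto
        moreover have "?w \<bullet> z = r / 2 * norm z" using False
          by (simp add: power2_norm_eq_inner[symmetric] power2_eq_square)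
        ultimately have "r / 2 * norm z \<le> 1" by linarith
        then have "norm z \<le> 2 / r" using r by (simp add: field_simps)
        then show ?thesis by simp
      qed
    qed
    then show ?thesis using bounded_cball bounded_subset by blast
  qed
  have bGp: "bounded (polar Gp)" using bG polar_antimono[OF GGp] bounded_subset by blast
  have transfer: "\<forall>y\<in>Gp. 1 - y \<bullet> p \<le> exp (2 * \<alpha>) * T * (1 - y \<bullet> x)"
    if p: "p \<in> polar K" and x: "x \<in> polar K" and T: "\<forall>g\<in>G. 1 - g \<bullet> p \<le> T * (1 - g \<bullet> x)" for p x T
  proof
    fix y assume y: "y \<in> Gp"
    have yK: "y \<in> interior K" using y GpK by blast
    have Tpos: "T > 0"
    proof -
      have "1 - 0 \<bullet> p \<le> T * (1 - 0 \<bullet> x)" using T G0 by blast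
      then show ?thesis by simp
    qed
    have Qp: "1 - y \<bullet> x > 0" using Gpx[OF y x] c by linarith
    have Pp: "1 - y \<bullet> p > 0" using Gpx[OF y p] c by linarith
    define \<rho> where "\<rho> = (1 - y \<bullet> p) / (T * (1 - y \<bullet> x))"
    have \<rho>: "\<rho> > 0" using Qp Pp Tpos by (simp add: \<rho>_def)
    have "ln \<rho> / 2 \<le> hilbert_dist K y g" if g: "g \<in> G" for g
    proof -
      have gK: "g \<in> interior K" using g assms(4) by blast
      have gx: "1 - g \<bullet> x > 0" using Gx[OF g x] c0 by linarith
      have "(1 - y \<bullet> p) * (1 - g \<bullet> x) \<le> exp (2 * hilbert_dist K y g) * ((1 - g \<bullet> p) * (1 - y \<bullet> x))"
        using K_ineq[OF cK(2,1) yK gK p x] by blast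
      also have "\<dots> \<le> exp (2 * hilbert_dist K y g) * ((T * (1 - g \<bullet> x)) * (1 - y \<bullet> x))"
        using T g Qp by (intro mult_left_mono mult_right_mono) auto
      finally have "(1 - y \<bullet> p) * (1 - g \<bullet> x) \<le> (exp (2 * hilbert_dist K y g) * (T * (1 - y \<bullet> x))) * (1 - g \<bullet> x)"
        by (simp add: ac_simps)
      then have "1 - y \<bullet> p \<le> exp (2 * hilbert_dist K y g) * (T * (1 - y \<bullet> x))"
        using gx by simp
      then have "\<rho> \<le> exp (2 * hilbert_dist K y g)" unfolding \<rho>_def using Tpos Qp
        by (simp add: divide_le_eq)
      then have "ln \<rho> \<le> 2 * hilbert_dist K y g" using \<rho> by (metis exp_gt_zero ln_exp ln_le_cancel_iff)
      then show ?thesis by simp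
    qed
    then have "ln \<rho> / 2 \<le> (INF g\<in>G. hilbert_dist K y g)" using Gne by (intro cINF_greatest) auto
    also have "\<dots> \<le> \<alpha>" using y Gp by auto
    finally have "ln \<rho> \<le> 2 * \<alpha>" by simp
    then have "exp (ln \<rho>) \<le> exp (2 * \<alpha>)" by simp
    then have "\<rho> \<le> exp (2 * \<alpha>)" using \<rho> by simp
    then show "1 - y \<bullet> p \<le> exp (2 * \<alpha>) * T * (1 - y \<bullet> x)" unfolding \<rho>_def using Tpos Qp
      by (simp add: divide_le_eq ac_simps)
  qed
  show ?thesis
  proof (intro ballI)
    fix p x assume p: "p \<in> polar K" and x: "x \<in> polar K"
    show "hilbert_dist (polar Gp) p x \<le> hilbert_dist (polar G) p x + 2 * \<alpha>
         \<and> (hilbert_dist (polar G) p x \<le> \<alpha> \<longrightarrow> hilbert_dist (polar Gp) p x \<le> 3 * \<alpha>)"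
    proof (cases "p = x")
      case True then show ?thesis using assms(5) by (simp add: hilbert_dist_def)
    next
      case False
      obtain s1 t1 where st1: "s1 > 1" "t1 > 1" "p + t1 *\<^sub>R (x - p) \<in> frontier (polar G)"
          "x + s1 *\<^sub>R (p - x) \<in> frontier (polar G)"
          "hilbert_dist (polar G) p x = ln (s1/(s1-1) * (t1/(t1-1))) / 2"
        using hd_formula[OF polar_convex bG KG[THEN subsetD, OF p] KG[THEN subsetD, OF x] False] by blast
      obtain s2 t2 where st2: "s2 > 1" "t2 > 1"
          "\<forall>\<tau>>t2. p + \<tau> *\<^sub>R (x - p) \<notin> closure (polar Gp)"
          "\<forall>\<tau>>s2. x + \<tau> *\<^sub>R (p - x) \<notin> closure (polar Gp)"
          "hilbert_dist (polar Gp) p x = ln (s2/(s2-1) * (t2/(t2-1))) / 2"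
        using hd_formula[OF polar_convex bGp KGp[THEN subsetD, OF p] KGp[THEN subsetD, OF x] False] by blast
      have fr: "frontier (polar G) \<subseteq> polar G" using polar_closed[of G] by (simp add: frontier_subset_closed)
      have T1: "\<forall>g\<in>G. 1 - g \<bullet> p \<le> t1/(t1-1) * (1 - g \<bullet> x)"
        using polar_i[of p t1 x G] st1(2,3) fr conv_T by blast
      have S1: "\<forall>g\<in>G. 1 - g \<bullet> x \<le> s1/(s1-1) * (1 - g \<bullet> p)"
        using polar_i[of x s1 p G] st1(1,4) fr conv_T by blast
      have "t2 \<le> (exp (2 * \<alpha>) * (t1/(t1-1))) * (t2 - 1)"
        by (rule polar_ii[OF KGp[THEN subsetD, OF p] KGp[THEN subsetD, OF x] st2(2,3) transfer[OF p x T1]])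
      then have T2: "t2/(t2-1) \<le> exp (2 * \<alpha>) * (t1/(t1-1))" using back_T st2(2) by blast
      have "s2 \<le> (exp (2 * \<alpha>) * (s1/(s1-1))) * (s2 - 1)"
        by (rule polar_ii[OF KGp[THEN subsetD, OF x] KGp[THEN subsetD, OF p] st2(1,4) transfer[OF x p S1]])
      then have S2: "s2/(s2-1) \<le> exp (2 * \<alpha>) * (s1/(s1-1))" using back_T st2(1) by blast
      have pos: "s1/(s1-1) > 0" "t1/(t1-1) > 0" "s2/(s2-1) > 0" "t2/(t2-1) > 0"
        using st1 st2 by auto
      have "s2/(s2-1) * (t2/(t2-1)) \<le> (exp (2 * \<alpha>) * (s1/(s1-1))) * (exp (2 * \<alpha>) * (t1/(t1-1)))"
        using S2 T2 pos by (intro mult_mono) auto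
      also have "\<dots> = exp (4 * \<alpha>) * (s1/(s1-1) * (t1/(t1-1)))"
      proof -
        have "exp (2 * \<alpha>) * exp (2 * \<alpha>) = exp (4 * \<alpha>)" by (simp add: exp_add[symmetric])
        then show ?thesis by (metis mult.assoc mult.left_commute)
      qed
      finally have "ln (s2/(s2-1) * (t2/(t2-1))) \<le> ln (exp (4 * \<alpha>) * (s1/(s1-1) * (t1/(t1-1))))"
        by (rule ln_mono[OF _ mult_pos_pos[OF pos(3) pos(4)]])
      also have "\<dots> = 4 * \<alpha> + ln (s1/(s1-1) * (t1/(t1-1)))"
        using ln_mult_pos[OF exp_gt_zero mult_pos_pos[OF pos(1) pos(2)], of "4 * \<alpha>"] by simp
      finally have main: "hilbert_dist (polar Gp) p x \<le> hilbert_dist (polar G) p x + 2 * \<alpha>"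
        unfolding st1(5) st2(5) by simp
      then show ?thesis by linarith
    qed
  qed
qed


theorem lemma4p4:
  fixes G K :: "'a::euclidean_space set" and \<alpha> :: real
  assumes "convex_body G" and "convex_body K"
    and "0 \<in> interior G" and "G \<subseteq> interior K"
    and "\<alpha> > 0"
  defines "Gp \<equiv> {y \<in> interior K. (INF g\<in>G. hilbert_dist K y g) \<le> \<alpha>}"
  shows "\<forall>p\<in>polar K. \<forall>x\<in>polar K.
           hilbert_dist (polar Gp) p x \<le> hilbert_dist (polar G) p x + 2 * \<alpha>
         \<and> (hilbert_dist (polar G) p x \<le> \<alpha> \<longrightarrow> hilbert_dist (polar Gp) p x \<le> 3 * \<alpha>)"
  unfolding Gp_def by (rule main_aux[OF assms(1-5) refl])

end
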